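(* Let $b,\omega:\mathbb{R}\to\mathbb{R}$ be continuous with $0<b_0\le b(t)\le b_1$ and $0\le\omega_0\le\omega(t)\le\omega_1<\pi^2$. If $\gamma$ is a non-negative bounded complete trajectory of (P) such that $\gamma(t)\to0$ in $L^2(0,1)$ as $t\to-\infty$, then for every $t_1\in\mathbb{R}$ there exists $t_0\le t_1$ with $\gamma(t_0)\notin D$. If additionally $b,\omega\in W^{1,2}_{loc}(\mathbb{R})$, the same conclusion holds for every bounded complete trajectory $\gamma$ (not necessarily non-negative) with $\gamma(t)\to0$ as $t\to-\infty$.
   Context: $H=L^2(0,1)$, $V=H_0^1(0,1)$, $A=-d^2/dx^2$, $D(A)=H^2(0,1)\cap V$, $H_0(s)=\{-1\}$ ($s<0$), $[-1,1]$ ($s=0$), $\{1\}$ ($s>0$). Problem (P) with initial time $\tau$: $\partial_t u-\partial_{xx}u\in b(t)H_0(u)+\omega(t)u$ on $(\tau,\infty)\times(0,1)$, Dirichlet conditions, $u(\tau)=u_\tau$. A solution is $u\in C([\tau,\infty),H)$ with $u(\tau)=u_\tau$, absolutely continuous on each $[T_1,T_2]$, $\tau<T_1<T_2$, $u(t)\in D(A)$ a.e., with some $r\in L^2_{loc}(\tau,\infty;H)$, $r(t)(x)\in b(t)H_0(u(t)(x))+\omega(t)u(t)(x)$ a.e., $du/dt+Au=r$ a.e. A complete trajectory is $\gamma:\mathbb{R}\to H$ whose restriction to each $[\tau,\infty)$ is a solution with initial time $\tau$; bounded if its range is bounded in $H$; non-negative if $\gamma(t)\ge0$ a.e. for all $t$.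 $D=\{v\in V: v(x)>0\ \forall x\in(0,1)\}$. *)

theory Defs
  imports "HOL-Analysis.Analysis"
begin

text \<open>Elements of H = L^2(0,1) are represented by functions real => real
  (representatives); identity in H is equality a.e. on (0,1).\<close>

definition sq_int :: "(real \<Rightarrow> real) \<Rightarrow> bool" where
  "sq_int f \<longleftrightarrow> set_borel_measurable lborel {0<..<1} f
     \<and> set_integrable lborel {0<..<1} (\<lambda>x. (f x)\<^sup>2)"

definition L2nrm :: "(real \<Rightarrow> real) \<Rightarrow> real" where
  "L2nrm f = sqrt (LBINT x:{0<..<1}. (f x)\<^sup>2)"

definition prim :: "(real \<Rightarrow> real) \<Rightarrow> real \<Rightarrow> real" where
  "prim g x = (LBINT s=0..x. g s)"

text \<open>F is the continuous representative of f in V = H_0^1(0,1).\<close>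
definition V_rep :: "(real \<Rightarrow> real) \<Rightarrow> (real \<Rightarrow> real) \<Rightarrow> bool" where
  "V_rep f F \<longleftrightarrow> (\<exists>g. sq_int g \<and> F = prim g \<and> F 1 = 0)
     \<and> (AE x in lborel. 0 < x \<and> x < 1 \<longrightarrow> f x = F x)"

text \<open>f in D(A) = H^2 \<inter> H_0^1 with second derivative h, i.e. A f = - h.\<close>
definition DA_lap :: "(real \<Rightarrow> real) \<Rightarrow> (real \<Rightarrow> real) \<Rightarrow> bool" where
  "DA_lap f h \<longleftrightarrow> sq_int h \<and> (\<exists>c. prim (\<lambda>y. c + prim h y) 1 = 0
     \<and> (AE x in lborel. 0 < x \<and> x < 1 \<longrightarrow> f x = prim (\<lambda>y. c + prim h y) x))"

definition in_D :: "(real \<Rightarrow> real) \<Rightarrow> bool" where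
  "in_D f \<longleftrightarrow> (\<exists>F. V_rep f F \<and> (\<forall>x. 0 < x \<and> x < 1 \<longrightarrow> F x > 0))"

definition Hsign :: "real \<Rightarrow> real \<Rightarrow> bool" where
  "Hsign s y \<longleftrightarrow> (s < 0 \<and> y = -1) \<or> (s = 0 \<and> -1 \<le> y \<and> y \<le> 1) \<or> (s > 0 \<and> y = 1)"

definition H_abs_cont :: "(real \<Rightarrow> real \<Rightarrow> real) \<Rightarrow> real \<Rightarrow> real \<Rightarrow> bool" where
  "H_abs_cont u T1 T2 \<longleftrightarrow> (\<forall>\<epsilon>>0. \<exists>\<delta>>0. \<forall>(n::nat) (a::nat \<Rightarrow> real) c.
     (\<forall>i<n. T1 \<le> a i \<and> a i \<le> c i \<and> c i \<le> T2)
     \<and> (\<forall>i<n. \<forall>j<n. i \<noteq> j \<longrightarrow> c i \<le> a j \<or> c j \<le> a i)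
     \<and> (\<Sum>i<n. c i - a i) < \<delta>
     \<longrightarrow> (\<Sum>i<n. L2nrm (\<lambda>x. u (c i) x - u (a i) x)) < \<epsilon>)"

definition has_H_deriv :: "(real \<Rightarrow> real \<Rightarrow> real) \<Rightarrow> (real \<Rightarrow> real) \<Rightarrow> real \<Rightarrow> bool" where
  "has_H_deriv u v t \<longleftrightarrow>
     ((\<lambda>s. L2nrm (\<lambda>x. (u s x - u t x) / (s - t) - v x)) \<longlongrightarrow> 0) (at t)"

text \<open>r in L^2_loc(tau,infinity; H), identified with L^2 on compact [T1,T2] x (0,1).\<close>
definition L2loc_H :: "real \<Rightarrow> (real \<Rightarrow> real \<Rightarrow> real) \<Rightarrow> bool" where
  "L2loc_H \<tau> r \<longleftrightarrow> (\<lambda>(t, x). r t x) \<in> borel_measurable (lborel \<Otimes>\<^sub>M lborel)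
     \<and> (\<forall>T1 T2. \<tau> < T1 \<and> T1 < T2 \<longrightarrow>
          set_integrable (lborel \<Otimes>\<^sub>M lborel) ({T1..T2} \<times> {0<..<1}) (\<lambda>(t, x). (r t x)\<^sup>2))"

definition is_solution ::
  "(real \<Rightarrow> real) \<Rightarrow> (real \<Rightarrow> real) \<Rightarrow> real \<Rightarrow> (real \<Rightarrow> real) \<Rightarrow> (real \<Rightarrow> real \<Rightarrow> real) \<Rightarrow> bool" where
  "is_solution b \<omega> \<tau> u\<^sub>\<tau> u \<longleftrightarrow>
     (\<forall>t\<ge>\<tau>. sq_int (u t))
     \<and> (\<forall>t\<ge>\<tau>. ((\<lambda>s. L2nrm (\<lambda>x. u s x - u t x)) \<longlongrightarrow> 0) (at t within {\<tau>..}))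
     \<and> sq_int u\<^sub>\<tau> \<and> L2nrm (\<lambda>x. u \<tau> x - u\<^sub>\<tau> x) = 0
     \<and> (\<forall>T1 T2. \<tau> < T1 \<and> T1 < T2 \<longrightarrow> H_abs_cont u T1 T2)
     \<and> (\<exists>r. L2loc_H \<tau> r
          \<and> (AE t in lborel. \<tau> < t \<longrightarrow>
               (AE x in lborel. 0 < x \<and> x < 1 \<longrightarrow>
                  (\<exists>y. Hsign (u t x) y \<and> r t x = b t * y + \<omega> t * u t x)))
          \<and> (AE t in lborel. \<tau> < t \<longrightarrow>
               (\<exists>h. DA_lap (u t) h \<and> has_H_deriv u (\<lambda>x. r t x + h x) t)))"

definition complete_traj ::
  "(real \<Rightarrow> real) \<Rightarrow> (real \<Rightarrow> real) \<Rightarrow> (real \<Rightarrow> real \<Rightarrow> real) \<Rightarrow> bool" where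
  "complete_traj b \<omega> \<gamma> \<longleftrightarrow> (\<forall>\<tau>. is_solution b \<omega> \<tau> (\<gamma> \<tau>) \<gamma>)"

definition bounded_traj :: "(real \<Rightarrow> real \<Rightarrow> real) \<Rightarrow> bool" where
  "bounded_traj \<gamma> \<longleftrightarrow> (\<exists>M. \<forall>t. L2nrm (\<gamma> t) \<le> M)"

definition nonneg_traj :: "(real \<Rightarrow> real \<Rightarrow> real) \<Rightarrow> bool" where
  "nonneg_traj \<gamma> \<longleftrightarrow> (\<forall>t. AE x in lborel. 0 < x \<and> x < 1 \<longrightarrow> \<gamma> t x \<ge> 0)"

definition W12loc :: "(real \<Rightarrow> real) \<Rightarrow> bool" where
  "W12loc f \<longleftrightarrow> (\<exists>g. g \<in> borel_measurable lborel
     \<and> (\<forall>a c. set_integrable lborel {a..c} (\<lambda>s. (g s)\<^sup>2))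
     \<and> (\<forall>t. f t = f 0 + (LBINT s=0..t. g s)))"

end

theory Submission
  imports Defs
begin



lemma sb_def': "set_borel_measurable lborel A f \<longleftrightarrow> (\<lambda>x. indicator A x * f x) \<in> borel_measurable lborel"
  for f :: "real \<Rightarrow> real" by (simp add: set_borel_measurable_def)

lemma si_def': "set_integrable lborel A f \<longleftrightarrow> integrable lborel (\<lambda>x. indicator A x * f x)"
  for f :: "real \<Rightarrow> real" by (simp add: set_integrable_def)

lemma sli_def': "(LBINT x:A. f x) = (LBINT x. indicator A x * f x)"
  for f :: "real \<Rightarrow> real" by (simp add: set_lebesgue_integral_def)

lemma ind_I_int: "integrable lborel (\<lambda>x. indicator {0<..<1::real} x :: real)"
  by (simp add: integrable_real_indicator)

lemma int_I_const [simp]: "(LBINT x:{0<..<1::real}. (c::real)) = c"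
  by (subst set_integral_const) auto

lemma sq_int_imp_int:
  assumes "sq_int f" shows "set_integrable lborel {0<..<1} f"
proof -
  have m: "(\<lambda>x. indicator {0<..<1::real} x * f x) \<in> borel_measurable lborel"
    using assms by (simp add: sq_int_def sb_def')
  have i2: "integrable lborel (\<lambda>x. indicator {0<..<1::real} x * (f x)\<^sup>2)"
    using assms by (simp add: sq_int_def si_def')
  have "integrable lborel (\<lambda>x. indicator {0<..<1::real} x + indicator {0<..<1::real} x * (f x)\<^sup>2)"
    using i2 ind_I_int by auto
  then show ?thesis unfolding si_def'
  proof (rule Bochner_Integration.integrable_bound)
    show "AE x in lborel. norm (indicator {0<..<1::real} x * f x) \<le> norm (indicator {0<..<1::real} x + indicator {0<..<1::real} x * (f x)\<^sup>2)"
    proof (rule AE_I2)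
      fix x
      have "0 \<le> (\<bar>f x\<bar> - 1)\<^sup>2" by simp
      then have "\<bar>f x\<bar> \<le> 1 + (f x)\<^sup>2" by (simp add: power2_eq_square algebra_simps)
      then show "norm (indicator {0<..<1::real} x * f x) \<le> norm (indicator {0<..<1::real} x + indicator {0<..<1::real} x * (f x)\<^sup>2)"
        by (auto simp: indicator_def)
    qed
  qed (rule m)
qed


lemma sq_int_const: "sq_int (\<lambda>x. c)"
  unfolding sq_int_def sb_def' si_def'
  using integrable_mult_right[OF ind_I_int, of "c\<^sup>2"]
  by (auto simp: mult.commute)

lemma sq_int_lin:
  assumes "sq_int f" "sq_int g" shows "sq_int (\<lambda>x. a * f x + c * g x)"
proof -
  have mf: "(\<lambda>x. indicator {0<..<1::real} x * f x) \<in> borel_measurable lborel"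
   and mg: "(\<lambda>x. indicator {0<..<1::real} x * g x) \<in> borel_measurable lborel"
    using assms by (simp_all add: sq_int_def sb_def')
  have i2f: "integrable lborel (\<lambda>x. indicator {0<..<1::real} x * (f x)\<^sup>2)"
   and i2g: "integrable lborel (\<lambda>x. indicator {0<..<1::real} x * (g x)\<^sup>2)"
    using assms by (simp_all add: sq_int_def si_def')
  have m: "(\<lambda>x. indicator {0<..<1::real} x * (a * f x + c * g x)) \<in> borel_measurable lborel"
  proof -
    have "(\<lambda>x. a * (indicator {0<..<1::real} x * f x) + c * (indicator {0<..<1::real} x * g x)) \<in> borel_measurable lborel"
      using mf mg by measurable
    moreover have "(\<lambda>x. a * (indicator {0<..<1::real} x * f x) + c * (indicator {0<..<1::real} x * g x)) = (\<lambda>x. indicator {0<..<1::real} x * (a * f x + c * g x))"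
      by (auto simp: algebra_simps)
    ultimately show ?thesis by simp
  qed
  have "integrable lborel (\<lambda>x. 2 * a\<^sup>2 * (indicator {0<..<1::real} x * (f x)\<^sup>2) + 2 * c\<^sup>2 * (indicator {0<..<1::real} x * (g x)\<^sup>2))"
    using i2f i2g by auto
  then have "integrable lborel (\<lambda>x. indicator {0<..<1::real} x * (a * f x + c * g x)\<^sup>2)"
  proof (rule Bochner_Integration.integrable_bound)
    have e: "(\<lambda>x. indicator {0<..<1::real} x * (a * f x + c * g x)\<^sup>2) = (\<lambda>x. (indicator {0<..<1::real} x * (a * f x + c * g x))\<^sup>2)"
      by (auto simp: indicator_def)
    show "(\<lambda>x. indicator {0<..<1::real} x * (a * f x + c * g x)\<^sup>2) \<in> borel_measurable lborel"
      unfolding e using m by measurable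
    show "AE x in lborel. norm (indicator {0<..<1::real} x * (a * f x + c * g x)\<^sup>2) \<le> norm (2 * a\<^sup>2 * (indicator {0<..<1::real} x * (f x)\<^sup>2) + 2 * c\<^sup>2 * (indicator {0<..<1::real} x * (g x)\<^sup>2))"
    proof (rule AE_I2)
      fix x
      have "(a * f x + c * g x)\<^sup>2 \<le> 2 * a\<^sup>2 * (f x)\<^sup>2 + 2 * c\<^sup>2 * (g x)\<^sup>2"
      proof -
        have "0 \<le> (a * f x - c * g x)\<^sup>2" by simp
        then show ?thesis by (simp add: power2_eq_square algebra_simps)
      qed
      then show "norm (indicator {0<..<1::real} x * (a * f x + c * g x)\<^sup>2) \<le> norm (2 * a\<^sup>2 * (indicator {0<..<1::real} x * (f x)\<^sup>2) + 2 * c\<^sup>2 * (indicator {0<..<1::real} x * (g x)\<^sup>2))"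
        by (auto simp: indicator_def)
    qed
  qed
  then show ?thesis using m by (simp add: sq_int_def sb_def' si_def')
qed

lemma sq_int_mult_bdd:
  assumes "sq_int f" "g \<in> borel_measurable lborel" "\<And>x. 0 < x \<Longrightarrow> x < 1 \<Longrightarrow> \<bar>g x\<bar> \<le> B"
  shows "set_integrable lborel {0<..<1} (\<lambda>x. f x * g x)"
proof -
  have mf: "(\<lambda>x. indicator {0<..<1::real} x * f x) \<in> borel_measurable lborel"
    using assms by (simp add: sq_int_def sb_def')
  have i: "integrable lborel (\<lambda>x. indicator {0<..<1::real} x * f x)"
    using sq_int_imp_int[OF assms(1)] by (simp add: si_def')
  have "integrable lborel (\<lambda>x. B * (indicator {0<..<1::real} x * f x))"
    using i by auto
  then have "integrable lborel (\<lambda>x. indicator {0<..<1::real} x * (f x * g x))"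
  proof (rule Bochner_Integration.integrable_bound)
    have "(\<lambda>x. (indicator {0<..<1::real} x * f x) * g x) \<in> borel_measurable lborel"
      using mf assms(2) by measurable
    then show "(\<lambda>x. indicator {0<..<1::real} x * (f x * g x)) \<in> borel_measurable lborel"
      by (simp add: mult.assoc)
    show "AE x in lborel. norm (indicator {0<..<1::real} x * (f x * g x)) \<le> norm (B * (indicator {0<..<1::real} x * f x))"
    proof (rule AE_I2)
      fix x
      show "norm (indicator {0<..<1::real} x * (f x * g x)) \<le> norm (B * (indicator {0<..<1::real} x * f x))"
      proof (cases "0 < x \<and> x < 1")
        case True
        then have "\<bar>g x\<bar> \<le> B" using assms(3) by auto
        then have "\<bar>f x * g x\<bar> \<le> \<bar>B\<bar> * \<bar>f x\<bar>"
          by (simp add: abs_mult) (metis abs_ge_zero mult.commute mult_left_mono)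
        then show ?thesis using True by (simp add: indicator_def abs_mult)
      qed (auto simp: indicator_def)
    qed
  qed
  then show ?thesis by (simp add: si_def')
qed

lemma abs_int_le_L2:
  assumes "sq_int f"
  shows "(LBINT x:{0<..<1}. \<bar>f x\<bar>) \<le> L2nrm f"
proof -
  define W where "W = (LBINT x:{0<..<1}. (f x)\<^sup>2)"
  define A where "A = (LBINT x:{0<..<1}. \<bar>f x\<bar>)"
  have iA: "set_integrable lborel {0<..<1} (\<lambda>x. \<bar>f x\<bar>)"
    using sq_int_imp_int[OF assms] by (simp add: set_integrable_abs)
  have iW: "set_integrable lborel {0<..<1} (\<lambda>x. (f x)\<^sup>2)"
    using assms by (simp add: sq_int_def)
  have iI: "set_integrable lborel {0<..<1::real} (\<lambda>x. 1::real)"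
    using ind_I_int by (simp add: si_def')
  have W0: "0 \<le> W" unfolding W_def sli_def' by (rule Bochner_Integration.integral_nonneg) (auto simp: indicator_def)
  have key: "A \<le> (l * W + 1 / l) / 2" if l: "l > 0" for l
  proof -
    have "A \<le> (LBINT x:{0<..<1}. (l * (f x)\<^sup>2 + 1 / l) / 2)"
      unfolding A_def
    proof (rule set_integral_mono)
      show "set_integrable lborel {0<..<1} (\<lambda>x. (l * (f x)\<^sup>2 + 1 / l) / 2)"
        using iW iI by (auto intro!: set_integral_add set_integrable_mult_right set_integrable_divide)
      fix x
      have "0 \<le> (sqrt l * \<bar>f x\<bar> - 1 / sqrt l)\<^sup>2" by simp
      also have "(sqrt l * \<bar>f x\<bar> - 1 / sqrt l)\<^sup>2 = l * (f x)\<^sup>2 + 1 / l - 2 * \<bar>f x\<bar>"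
        using l by (simp add: power2_diff power_mult_distrib power_divide)
      finally show "\<bar>f x\<bar> \<le> (l * (f x)\<^sup>2 + 1 / l) / 2" by simp
    qed (use iA in auto)
    also have "\<dots> = (l * W + 1 / l) / 2"
    proof -
      have "(LBINT x:{0<..<1}. (l * (f x)\<^sup>2 + 1 / l) / 2) = ((LBINT x:{0<..<1}. l * (f x)\<^sup>2) + (LBINT x:{0<..<1::real}. 1 / l)) / 2"
        using iW iI by (simp add: set_integral_add set_integrable_mult_right set_integrable_divide)
      also have "\<dots> = (l * W + 1 / l) / 2"
        using iW iI by (simp add: W_def set_integral_mult_right)
      finally show ?thesis .
    qed
    finally show ?thesis .
  qed
  have A0: "0 \<le> A" unfolding A_def sli_def' by (rule Bochner_Integration.integral_nonneg) (auto simp: indicator_def)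
  show ?thesis
  proof (cases "W = 0")
    case True
    show ?thesis
    proof (rule ccontr)
      assume "\<not> ?thesis"
      then have "A > 0" using True by (simp add: L2nrm_def W_def[symmetric] A_def[symmetric])
      then have "A \<le> (1 / A * W + 1 / (1/A)) / 2" using key[of "1/A"] by simp
      with True \<open>A > 0\<close> show False by simp
    qed
  next
    case False
    then have Wp: "W > 0" using W0 by simp
    have "A \<le> (1 / sqrt W * W + 1 / (1 / sqrt W)) / 2" using key[of "1 / sqrt W"] Wp by simp
    also have "\<dots> = sqrt W" using Wp by (simp add: field_simps real_sqrt_mult[symmetric])
    finally show ?thesis by (simp add: L2nrm_def W_def A_def)
  qed
qed

lemma CS_bound:
  assumes f: "sq_int f" and g: "g \<in> borel_measurable lborel"
    and gB: "\<And>x. 0 < x \<Longrightarrow> x < 1 \<Longrightarrow> \<bar>g x\<bar> \<le> B"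
  shows "\<bar>LBINT x:{0<..<1}. f x * g x\<bar> \<le> B * L2nrm f"
proof -
  have B0: "0 \<le> B" using gB[of "1/2"] by simp
  have i1: "set_integrable lborel {0<..<1} (\<lambda>x. f x * g x)" by (rule sq_int_mult_bdd[OF f g gB])
  have i2: "set_integrable lborel {0<..<1} (\<lambda>x. \<bar>f x\<bar>)"
    using sq_int_imp_int[OF f] by (simp add: set_integrable_abs)
  have "\<bar>LBINT x:{0<..<1}. f x * g x\<bar> \<le> (LBINT x:{0<..<1}. \<bar>f x * g x\<bar>)"
    unfolding sli_def' using integral_abs_bound[of lborel "\<lambda>x. indicator {0<..<1::real} x * (f x * g x)"]
    by (simp add: abs_mult)
  also have "\<dots> \<le> (LBINT x:{0<..<1}. B * \<bar>f x\<bar>)"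
  proof (rule set_integral_mono)
    show "set_integrable lborel {0<..<1} (\<lambda>x. \<bar>f x * g x\<bar>)" using i1 by (rule set_integrable_abs)
    show "set_integrable lborel {0<..<1} (\<lambda>x. B * \<bar>f x\<bar>)" using i2 by simp
    fix x :: real assume "x \<in> {0<..<1}"
    then have "\<bar>g x\<bar> \<le> B" using gB by auto
    then show "\<bar>f x * g x\<bar> \<le> B * \<bar>f x\<bar>"
      by (simp add: abs_mult) (metis abs_ge_zero mult.commute mult_left_mono)
  qed
  also have "\<dots> = B * (LBINT x:{0<..<1}. \<bar>f x\<bar>)" by simp
  also have "\<dots> \<le> B * L2nrm f" using abs_int_le_L2[OF f] B0 by (rule mult_left_mono)
  finally show ?thesis .
qed




lemma ac_lower_eps:
  fixes f :: "real \<Rightarrow> real"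
  assumes ab: "a \<le> b"
  and AC: "\<forall>\<epsilon>>0. \<exists>\<delta>>0. \<forall>(n::nat) (p::nat\<Rightarrow>real) q. (\<forall>i<n. a \<le> p i \<and> p i \<le> q i \<and> q i \<le> b)
       \<and> (\<forall>i<n. \<forall>j<n. i \<noteq> j \<longrightarrow> q i \<le> p j \<or> q j \<le> p i) \<and> (\<Sum>i<n. q i - p i) < \<delta>
       \<longrightarrow> (\<Sum>i<n. \<bar>f (q i) - f (p i)\<bar>) < \<epsilon>"
  and N0: "N0 \<in> null_sets lborel"
  and D: "\<And>t. a < t \<Longrightarrow> t < b \<Longrightarrow> t \<notin> N0 \<Longrightarrow> \<exists>d. (f has_real_derivative d) (at t) \<and> C \<le> d"
  and e: "0 < e" "e \<le> 1"
  shows "C * (b - a) - e * (b - a + 2 + \<bar>C\<bar>) \<le> f b - f a"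
proof -
  obtain \<delta> where dpos: "\<delta> > 0" and dAC: "\<And>(n::nat) (p::nat\<Rightarrow>real) q. (\<forall>i<n. a \<le> p i \<and> p i \<le> q i \<and> q i \<le> b)
       \<Longrightarrow> (\<forall>i<n. \<forall>j<n. i \<noteq> j \<longrightarrow> q i \<le> p j \<or> q j \<le> p i) \<Longrightarrow> (\<Sum>i<n. q i - p i) < \<delta>
       \<Longrightarrow> (\<Sum>i<n. \<bar>f (q i) - f (p i)\<bar>) < e"
  proof -
    from AC e obtain \<delta> where "\<delta> > 0" and H: "\<forall>(n::nat) (p::nat\<Rightarrow>real) q. (\<forall>i<n. a \<le> p i \<and> p i \<le> q i \<and> q i \<le> b)
       \<and> (\<forall>i<n. \<forall>j<n. i \<noteq> j \<longrightarrow> q i \<le> p j \<or> q j \<le> p i) \<and> (\<Sum>i<n. q i - p i) < \<delta>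
       \<longrightarrow> (\<Sum>i<n. \<bar>f (q i) - f (p i)\<bar>) < e" by blast
    show ?thesis using that[OF \<open>\<delta> > 0\<close>] H by blast
  qed
  define \<eta> where "\<eta> = min \<delta> e"
  have etapos: "\<eta> > 0" using dpos e by (simp add: \<eta>_def)
  define N where "N = N0 \<union> {a, b}"
  have Nnull: "N \<in> null_sets lebesgue"
  proof -
    have "N0 \<in> null_sets lebesgue" using N0 by (rule null_sets_completionI)
    moreover have "{a, b} \<in> null_sets lebesgue"
      using negligible_iff_null_sets negligible_finite by blast
    ultimately show ?thesis unfolding N_def by auto
  qed
  obtain G where Gopen: "open G" and NG: "N \<subseteq> G" and GN: "(G - N) \<in> lmeasurable"
      and GNm: "emeasure lebesgue (G - N) < ennreal \<eta>"
    using sets_lebesgue_outer_open[of N \<eta>] Nnull etapos by blast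
  have Gm: "emeasure lebesgue G < ennreal \<eta>"
  proof -
    have "G = (G - N) \<union> N" using NG by auto
    then have "emeasure lebesgue G \<le> emeasure lebesgue (G - N) + emeasure lebesgue N"
      by (metis GN Nnull emeasure_subadditive fmeasurableD null_setsD2)
    also have "\<dots> = emeasure lebesgue (G - N)" using Nnull by auto
    finally show ?thesis using GNm by simp
  qed
  have Gfm: "G \<in> lmeasurable"
    using Gm Gopen by (intro fmeasurableI) (auto simp: borel_open intro: order.strict_trans[OF _ ennreal_less_top])
  have Gmeas: "measure lebesgue G < \<eta>"
    using Gm Gfm etapos by (simp add: emeasure_eq_measure2 ennreal_less_iff)
  have loc: "\<exists>r>0. (t \<in> N \<longrightarrow> ball t r \<subseteq> G) \<and> (t \<notin> N \<and> a < t \<and> t < b \<longrightarrow>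
       (\<forall>u v. t - r < u \<longrightarrow> u \<le> t \<longrightarrow> t \<le> v \<longrightarrow> v < t + r \<longrightarrow> (C - e) * (v - u) \<le> f v - f u))" for t
  proof (cases "t \<in> N")
    case True
    then obtain r where "r > 0" "ball t r \<subseteq> G" using Gopen NG open_contains_ball by blast
    then show ?thesis using True by auto
  next
    case False
    show ?thesis
    proof (cases "a < t \<and> t < b")
      case False': True
      then have "t \<notin> N0" using False by (auto simp: N_def)
      then obtain d where fd: "(f has_real_derivative d) (at t)" and Cd: "C \<le> d"
        using D False' by blast
      have "((\<lambda>y. (f y - f t) / (y - t)) \<longlongrightarrow> d) (at t)"
        using fd by (simp add: has_field_derivative_iff)
      then have "\<forall>\<^sub>F y in at t. dist ((f y - f t) / (y - t)) d < e"
        using e by (simp add: tendsto_iff)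
      then obtain r where rpos: "r > 0" and rP: "\<And>y. y \<noteq> t \<Longrightarrow> dist y t < r \<Longrightarrow> dist ((f y - f t) / (y - t)) d < e"
        by (auto simp: eventually_at)
      have up: "(C - e) * (v - t) \<le> f v - f t" if "t \<le> v" "v < t + r" for v
      proof (cases "v = t")
        case False
        then have "v > t" using that by simp
        then have "\<bar>(f v - f t) / (v - t) - d\<bar> < e" using rP[of v] that by (simp add: dist_real_def)
        then have "d - e \<le> (f v - f t) / (v - t)" by simp
        then have "(d - e) * (v - t) \<le> f v - f t" using \<open>v > t\<close> by (simp add: le_divide_eq)
        moreover have "(C - e) * (v - t) \<le> (d - e) * (v - t)" using Cd \<open>v > t\<close> by (simp add: mult_right_mono)
        ultimately show ?thesis by linarith
      qed simp
      have down: "(C - e) * (t - u) \<le> f t - f u" if "t - r < u" "u \<le> t" for u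
      proof (cases "u = t")
        case False
        then have "u < t" using that by simp
        then have "\<bar>(f u - f t) / (u - t) - d\<bar> < e" using rP[of u] that by (simp add: dist_real_def)
        moreover have "(f u - f t) / (u - t) = (f t - f u) / (t - u)"
          by (simp add: divide_simps algebra_simps)
        ultimately have "d - e \<le> (f t - f u) / (t - u)" by simp
        then have "(d - e) * (t - u) \<le> f t - f u" using \<open>u < t\<close> by (simp add: le_divide_eq)
        moreover have "(C - e) * (t - u) \<le> (d - e) * (t - u)" using Cd \<open>u < t\<close> by (simp add: mult_right_mono)
        ultimately show ?thesis by linarith
      qed simp
      have "(\<forall>u v. t - r < u \<longrightarrow> u \<le> t \<longrightarrow> t \<le> v \<longrightarrow> v < t + r \<longrightarrow> (C - e) * (v - u) \<le> f v - f u)"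
      proof (intro allI impI)
        fix u v assume "t - r < u" "u \<le> t" "t \<le> v" "v < t + r"
        then have "(C - e) * (v - t) + (C - e) * (t - u) \<le> f v - f u"
          using up down by fastforce
        then show "(C - e) * (v - u) \<le> f v - f u" by (simp add: algebra_simps)
      qed
      then show ?thesis using rpos False by blast
    next
      case False'': False
      show ?thesis using False False'' by (intro exI[of _ 1]) auto
    qed
  qed
  then have "\<forall>t. \<exists>r. r > 0 \<and> (t \<in> N \<longrightarrow> ball t r \<subseteq> G) \<and> (t \<notin> N \<and> a < t \<and> t < b \<longrightarrow>
       (\<forall>u v. t - r < u \<longrightarrow> u \<le> t \<longrightarrow> t \<le> v \<longrightarrow> v < t + r \<longrightarrow> (C - e) * (v - u) \<le> f v - f u))"
    by blast
  from choice[OF this] obtain R where R: "\<forall>t. R t > 0 \<and> (t \<in> N \<longrightarrow> ball t (R t) \<subseteq> G) \<and> (t \<notin> N \<and> a < t \<and> t < b \<longrightarrow>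
       (\<forall>u v. t - R t < u \<longrightarrow> u \<le> t \<longrightarrow> t \<le> v \<longrightarrow> v < t + R t \<longrightarrow> (C - e) * (v - u) \<le> f v - f u))"
    by blast
  have Rpos: "\<And>t. R t > 0" and RG: "\<And>t. t \<in> N \<Longrightarrow> ball t (R t) \<subseteq> G"
    and RQ: "\<And>t u v. t \<notin> N \<Longrightarrow> a < t \<Longrightarrow> t < b \<Longrightarrow> t - R t < u \<Longrightarrow> u \<le> t \<Longrightarrow> t \<le> v \<Longrightarrow> v < t + R t \<Longrightarrow> (C - e) * (v - u) \<le> f v - f u"
    using R by blast+
  have "gauge (\<lambda>t. ball t (R t))" using Rpos by (simp add: gauge_def)
  then obtain p where p: "p tagged_division_of {a..b}" and fine: "(\<lambda>t. ball t (R t)) fine p"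
    by (rule fine_division_exists_real)
  have pfin: "finite p" using p by blast
  have Kint: "\<And>x K. (x, K) \<in> p \<Longrightarrow> K = {Inf K..Sup K} \<and> Inf K \<le> x \<and> x \<le> Sup K \<and> a \<le> Inf K \<and> Sup K \<le> b"
  proof -
    fix x K assume xK: "(x, K) \<in> p"
    obtain u v where K: "K = cbox u v" using tagged_division_ofD(4)[OF p xK] by blast
    have "x \<in> K" using tagged_division_ofD(2)[OF p xK] .
    then have uv: "u \<le> v" "u \<le> x" "x \<le> v" using K by auto
    have "K \<subseteq> {a..b}" using tagged_division_ofD(3)[OF p xK] .
    then show "K = {Inf K..Sup K} \<and> Inf K \<le> x \<and> x \<le> Sup K \<and> a \<le> Inf K \<and> Sup K \<le> b"
      using K uv by auto
  qed
  have Kball: "\<And>x K. (x, K) \<in> p \<Longrightarrow> K \<subseteq> ball x (R x)"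
    using fine by (auto simp: fine_def)
  define T where "T = (\<lambda>(x::real, K::real set). f (Sup K) - f (Inf K))"
  define L where "L = (\<lambda>(x::real, K::real set). Sup K - Inf K)"
  have sumT: "sum T p = f b - f a"
    unfolding T_def using additive_tagged_division_1[OF ab p, of f] by simp
  have sumL: "sum L p = b - a"
    unfolding L_def using additive_tagged_division_1[OF ab p, of "\<lambda>x. x"] by simp
  define p1 where "p1 = {xK \<in> p. fst xK \<in> N}"
  define p2 where "p2 = {xK \<in> p. fst xK \<notin> N}"
  have p12: "p = p1 \<union> p2" "p1 \<inter> p2 = {}" "finite p1" "finite p2"
    using pfin by (auto simp: p1_def p2_def)
  have sumT12: "sum T p = sum T p1 + sum T p2" and sumL12: "sum L p = sum L p1 + sum L p2"
    using p12 by (simp_all add: sum.union_disjoint)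
  have L0: "\<And>xK. xK \<in> p \<Longrightarrow> 0 \<le> L xK"
    using Kint unfolding L_def by fastforce
  have T2: "(C - e) * sum L p2 \<le> sum T p2"
    unfolding sum_distrib_left
  proof (rule sum_mono)
    fix xK assume "xK \<in> p2"
    then obtain x K where xK: "xK = (x, K)" "(x, K) \<in> p" "x \<notin> N" by (cases xK) (auto simp: p2_def)
    have ab': "a \<noteq> x" "b \<noteq> x" using xK(3) by (auto simp: N_def)
    have I: "K = {Inf K..Sup K}" "Inf K \<le> x" "x \<le> Sup K" "a \<le> Inf K" "Sup K \<le> b" using Kint[OF xK(2)] by auto
    have "a < x" "x < b" using I ab' by auto
    have "Inf K \<in> K" "Sup K \<in> K" using I by (metis atLeastAtMost_iff order.refl order.trans)+
    then have "Inf K \<in> ball x (R x)" "Sup K \<in> ball x (R x)" using Kball[OF xK(2)] by auto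
    then have "x - R x < Inf K" "Sup K < x + R x" by (auto simp: dist_real_def)
    then show "(C - e) * L xK \<le> T xK"
      using RQ[OF xK(3) \<open>a < x\<close> \<open>x < b\<close>] I unfolding xK(1) L_def T_def by auto
  qed
  have L1: "sum L p1 < \<eta>"
  proof -
    have meq: "measure lebesgue (snd xK) = L xK" if "xK \<in> p1" for xK
    proof -
      obtain x K where xK: "xK = (x, K)" "(x, K) \<in> p" using \<open>xK \<in> p1\<close> by (cases xK) (auto simp: p1_def)
      have I: "K = {Inf K..Sup K}" "Inf K \<le> Sup K" using Kint[OF xK(2)] by auto
      have "measure lebesgue K = measure lborel {Inf K..Sup K}"
        using I by (metis measure_completion sets_lborel atLeastAtMost_borel)
      also have "\<dots> = Sup K - Inf K" by (rule content_real[OF I(2)])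
      finally show ?thesis by (simp add: xK L_def)
    qed
    have "sum L p1 = (\<Sum>xK\<in>p1. measure lebesgue (snd xK))"
      using meq by simp
    also have "\<dots> = measure lebesgue (\<Union>(snd ` p1))"
    proof (rule measure_negligible_finite_Union_image[symmetric])
      show "finite p1" using p12 by simp
      show "snd xK \<in> lmeasurable" if "xK \<in> p1" for xK
        using that Kint by (cases xK) (auto simp: p1_def, metis lmeasurable_cbox cbox_interval)
      show "pairwise (\<lambda>xK yK. negligible (snd xK \<inter> snd yK)) p1"
        unfolding pairwise_def
      proof (intro ballI impI)
        fix xK yK assume "xK \<in> p1" "yK \<in> p1" "xK \<noteq> yK"
        then obtain x K y K' where xK: "xK = (x, K)" "(x, K) \<in> p" and yK: "yK = (y, K')" "(y, K') \<in> p"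
          by (cases xK, cases yK) (auto simp: p1_def)
        have dis: "interior K \<inter> interior K' = {}"
          using tagged_division_ofD(5)[OF p xK(2) yK(2)] \<open>xK \<noteq> yK\<close> xK yK by auto
        have I: "K = {Inf K..Sup K}" "K' = {Inf K'..Sup K'}" using Kint xK yK by auto
        have "K \<inter> K' \<subseteq> {Inf K, Sup K, Inf K', Sup K'}"
        proof
          fix z assume z: "z \<in> K \<inter> K'"
          show "z \<in> {Inf K, Sup K, Inf K', Sup K'}"
          proof (rule ccontr)
            assume "z \<notin> {Inf K, Sup K, Inf K', Sup K'}"
            moreover have z1: "z \<in> {Inf K..Sup K}" using z I(1) by (metis IntD1)
            moreover have z2: "z \<in> {Inf K'..Sup K'}" using z I(2) by (metis IntD2)
            ultimately have "z \<in> {Inf K<..<Sup K}" "z \<in> {Inf K'<..<Sup K'}"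
              by (auto simp del: atLeastAtMost_iff simp add: atLeastAtMost_iff[of z] order_less_le)
            then have "z \<in> interior K \<inter> interior K'" using I by (metis IntI interior_atLeastAtMost_real)
            then show False using dis by simp
          qed
        qed
        then show "negligible (snd xK \<inter> snd yK)" using xK yK
          using negligible_subset[OF negligible_finite[of "{Inf K, Sup K, Inf K', Sup K'}"]] by auto
      qed
    qed
    also have "\<dots> \<le> measure lebesgue G"
    proof (rule measure_mono_fmeasurable)
      show "\<Union>(snd ` p1) \<subseteq> G"
      proof
        fix z assume "z \<in> \<Union>(snd ` p1)"
        then obtain x K where "(x, K) \<in> p" "x \<in> N" "z \<in> K" by (auto simp: p1_def)
        then show "z \<in> G" using Kball RG by blast
      qed
      show "\<Union>(snd ` p1) \<in> sets lebesgue"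
        using p12(3) Kint by (intro sets.finite_UN) (auto simp: p1_def, metis lmeasurable_cbox cbox_interval fmeasurableD)
      show "G \<in> fmeasurable lebesgue" using Gfm .
    qed
    finally show ?thesis using Gmeas by linarith
  qed
  \<comment> \<open>the bad part: small variation via absolute continuity\<close>
  have T1: "- e < sum T p1"
  proof -
    define p1' where "p1' = {xK \<in> p1. Inf (snd xK) < Sup (snd xK)}"
    have fin1': "finite p1'" using p12 by (simp add: p1'_def)
    have "sum (\<lambda>xK. \<bar>T xK\<bar>) p1 = sum (\<lambda>xK. \<bar>T xK\<bar>) p1'"
    proof (rule sum.mono_neutral_right)
      show "finite p1" using p12 by simp
      show "p1' \<subseteq> p1" by (auto simp: p1'_def)
      show "\<forall>i\<in>p1 - p1'. \<bar>T i\<bar> = 0"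
      proof
        fix xK assume "xK \<in> p1 - p1'"
        then obtain x K where xK: "xK = (x, K)" "(x, K) \<in> p" "\<not> Inf K < Sup K"
          by (cases xK) (auto simp: p1_def p1'_def)
        then have "Inf K = Sup K" using Kint[OF xK(2)] by auto
        then show "\<bar>T xK\<bar> = 0" by (simp add: xK T_def)
      qed
    qed
    also have "\<dots> < e"
    proof -
      obtain g where g: "bij_betw g {0..<card p1'} p1'" using ex_bij_betw_nat_finite[OF fin1'] by blast
      define n where "n = card p1'"
      define pp where "pp = (\<lambda>i. Inf (snd (g i)))"
      define qq where "qq = (\<lambda>i. Sup (snd (g i)))"
      have gin: "\<And>i. i < n \<Longrightarrow> g i \<in> p1'" using g by (auto simp: n_def bij_betw_def)
      have ginj: "\<And>i j. i < n \<Longrightarrow> j < n \<Longrightarrow> g i = g j \<Longrightarrow> i = j"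
        using g by (auto simp: n_def bij_betw_def inj_on_def)
      have lt: "{..<n} = {0..<card p1'}" by (auto simp: n_def)
      have c1: "\<forall>i<n. a \<le> pp i \<and> pp i \<le> qq i \<and> qq i \<le> b"
      proof (intro allI impI)
        fix i assume "i < n"
        then have "g i \<in> p" using gin by (auto simp: p1'_def p1_def)
        then show "a \<le> pp i \<and> pp i \<le> qq i \<and> qq i \<le> b"
          using Kint[of "fst (g i)" "snd (g i)"] by (auto simp: pp_def qq_def)
      qed
      have c2: "\<forall>i<n. \<forall>j<n. i \<noteq> j \<longrightarrow> qq i \<le> pp j \<or> qq j \<le> pp i"
      proof (intro allI impI)
        fix i j assume ij: "i < n" "j < n" "i \<noteq> j"
        then have ne: "g i \<noteq> g j" using ginj by blast
        have gi: "g i \<in> p" "pp i < qq i" using gin[OF ij(1)] by (auto simp: p1'_def p1_def pp_def qq_def)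
        have gj: "g j \<in> p" "pp j < qq j" using gin[OF ij(2)] by (auto simp: p1'_def p1_def pp_def qq_def)
        have dis: "interior (snd (g i)) \<inter> interior (snd (g j)) = {}"
          using tagged_division_ofD(5)[OF p, of "fst (g i)" "snd (g i)" "fst (g j)" "snd (g j)"] gi gj ne by auto
        have Ii: "snd (g i) = {pp i..qq i}" using Kint[of "fst (g i)" "snd (g i)"] gi by (auto simp: pp_def qq_def)
        have Ij: "snd (g j) = {pp j..qq j}" using Kint[of "fst (g j)" "snd (g j)"] gj by (auto simp: pp_def qq_def)
        show "qq i \<le> pp j \<or> qq j \<le> pp i"
        proof (rule ccontr)
          assume "\<not> ?thesis"
          then have h: "pp j < qq i" "pp i < qq j" by auto
          define z where "z = (max (pp i) (pp j) + min (qq i) (qq j)) / 2"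
          have "z \<in> {pp i<..<qq i}" "z \<in> {pp j<..<qq j}" using h gi gj by (auto simp: z_def)
          then show False using dis Ii Ij by (metis IntI empty_iff interior_atLeastAtMost_real)
        qed
      qed
      have c3: "(\<Sum>i<n. qq i - pp i) < \<delta>"
      proof -
        have "(\<Sum>i<n. qq i - pp i) = (\<Sum>i\<in>{0..<card p1'}. L (g i))"
          using lt by (simp add: qq_def pp_def L_def case_prod_beta)
        also have "\<dots> = sum L p1'" using sum.reindex_bij_betw[OF g] .
        also have "\<dots> \<le> sum L p1"
          using p12 L0 by (intro sum_mono2) (auto simp: p1'_def p1_def)
        also have "\<dots> < \<delta>" using L1 by (simp add: \<eta>_def)
        finally show ?thesis .
      qed
      have "(\<Sum>i<n. \<bar>f (qq i) - f (pp i)\<bar>) < e" using dAC[OF c1 c2 c3] .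
      moreover have "(\<Sum>i<n. \<bar>f (qq i) - f (pp i)\<bar>) = sum (\<lambda>xK. \<bar>T xK\<bar>) p1'"
      proof -
        have "(\<Sum>i<n. \<bar>f (qq i) - f (pp i)\<bar>) = (\<Sum>i\<in>{0..<card p1'}. \<bar>T (g i)\<bar>)"
          using lt by (simp add: qq_def pp_def T_def case_prod_beta)
        also have "\<dots> = sum (\<lambda>xK. \<bar>T xK\<bar>) p1'" using sum.reindex_bij_betw[OF g] .
        finally show ?thesis .
      qed
      ultimately show ?thesis by simp
    qed
    finally have "sum (\<lambda>xK. \<bar>T xK\<bar>) p1 < e" .
    moreover have "- sum (\<lambda>xK. \<bar>T xK\<bar>) p1 \<le> sum T p1"
      by (simp add: sum_negf[symmetric] sum_mono)
    ultimately show ?thesis by linarith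
  qed
  have SL1: "0 \<le> sum L p1" "sum L p1 \<le> e"
    using L1 L0 by (auto simp: \<eta>_def p1_def intro: sum_nonneg)
  have "f b - f a = sum T p1 + sum T p2" using sumT sumT12 by simp
  also have "\<dots> \<ge> - e + (C - e) * sum L p2" using T1 T2 by linarith
  finally have X0: "- e + (C - e) * sum L p2 \<le> f b - f a" .
  have "sum L p2 = b - a - sum L p1" using sumL sumL12 by simp
  with X0 have X: "- e + (C - e) * (b - a - sum L p1) \<le> f b - f a" by simp
  have "\<bar>(C - e) * sum L p1\<bar> \<le> (\<bar>C\<bar> + 1) * e"
  proof -
    have "\<bar>(C - e) * sum L p1\<bar> = \<bar>C - e\<bar> * sum L p1" using SL1 by (simp add: abs_mult)
    also have "\<dots> \<le> (\<bar>C\<bar> + 1) * e"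
      using SL1 e by (intro mult_mono) auto
    finally show ?thesis .
  qed
  then have "(C - e) * sum L p1 \<le> (\<bar>C\<bar> + 1) * e" by (meson abs_le_D1)
  moreover have "(C - e) * (b - a - sum L p1) = (C - e) * (b - a) - (C - e) * sum L p1"
    by (simp add: algebra_simps)
  moreover have "(C - e) * (b - a) = C * (b - a) - e * (b - a)" by (simp add: algebra_simps)
  moreover have "e * (b - a + 2 + \<bar>C\<bar>) = e * (b - a) + 2 * e + (\<bar>C\<bar> + 1) * e - e" by (simp add: algebra_simps)
  ultimately show ?thesis using X by linarith
qed

lemma ac_lower:
  fixes f :: "real \<Rightarrow> real"
  assumes ab: "a \<le> b"
  and AC: "\<forall>\<epsilon>>0. \<exists>\<delta>>0. \<forall>(n::nat) (p::nat\<Rightarrow>real) q. (\<forall>i<n. a \<le> p i \<and> p i \<le> q i \<and> q i \<le> b)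
       \<and> (\<forall>i<n. \<forall>j<n. i \<noteq> j \<longrightarrow> q i \<le> p j \<or> q j \<le> p i) \<and> (\<Sum>i<n. q i - p i) < \<delta>
       \<longrightarrow> (\<Sum>i<n. \<bar>f (q i) - f (p i)\<bar>) < \<epsilon>"
  and N0: "N0 \<in> null_sets lborel"
  and D: "\<And>t. a < t \<Longrightarrow> t < b \<Longrightarrow> t \<notin> N0 \<Longrightarrow> \<exists>d. (f has_real_derivative d) (at t) \<and> C \<le> d"
  shows "C * (b - a) \<le> f b - f a"
proof (rule ccontr)
  assume H: "\<not> C * (b - a) \<le> f b - f a"
  define g where "g = C * (b - a) - (f b - f a)"
  define M where "M = b - a + 2 + \<bar>C\<bar>"
  have gp: "g > 0" using H by (simp add: g_def)
  have Mp: "M > 0" using ab by (simp add: M_def)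
  define e where "e = min 1 (g / (2 * M))"
  have e: "0 < e" "e \<le> 1" using gp Mp by (auto simp: e_def)
  have "C * (b - a) - e * M \<le> f b - f a"
    using ac_lower_eps[OF ab AC N0 D e] by (simp add: M_def)
  then have "g \<le> e * M" by (simp add: g_def)
  also have "e * M \<le> g / (2 * M) * M" using Mp by (intro mult_right_mono) (auto simp: e_def)
  also have "\<dots> = g / 2" using Mp by simp
  finally show False using gp by simp
qed




lemma prim_eq: "0 \<le> y \<Longrightarrow> prim h y = (LBINT s:{0<..<y}. h s)"
  for h :: "real \<Rightarrow> real"
proof -
  have "{x. 0 < x \<and> x < y} = {0<..<y}" by auto
  then show "0 \<le> y \<Longrightarrow> prim h y = (LBINT s:{0<..<y}. h s)"
    unfolding prim_def interval_lebesgue_integral_def einterval_def by simp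
qed

lemma integrable_prod_lborel:
  fixes f g :: "real \<Rightarrow> real"
  assumes f: "integrable lborel f" and g: "integrable lborel g"
  shows "integrable (lborel \<Otimes>\<^sub>M lborel) (\<lambda>(x,y). f x * g y)"
proof -
  have fm[measurable]: "f \<in> borel_measurable lborel" and gm[measurable]: "g \<in> borel_measurable lborel"
    using f g by auto
  have "(\<integral>\<^sup>+z. ennreal (norm ((\<lambda>(x,y). f x * g y) z)) \<partial>(lborel \<Otimes>\<^sub>M lborel))
      = (\<integral>\<^sup>+x. \<integral>\<^sup>+y. ennreal (norm (f x * g y)) \<partial>lborel \<partial>lborel)"
  proof -
    have "(\<lambda>z. ennreal (norm ((\<lambda>(x,y). f x * g y) z))) \<in> borel_measurable (lborel \<Otimes>\<^sub>M lborel)"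
      by measurable
    from lborel.nn_integral_fst[OF this] show ?thesis by simp
  qed
  also have "\<dots> = (\<integral>\<^sup>+x. ennreal (norm (f x)) * (\<integral>\<^sup>+y. ennreal (norm (g y)) \<partial>lborel) \<partial>lborel)"
    by (simp add: abs_mult ennreal_mult nn_integral_cmult)
  also have "\<dots> = (\<integral>\<^sup>+x. ennreal (norm (f x)) \<partial>lborel) * (\<integral>\<^sup>+y. ennreal (norm (g y)) \<partial>lborel)"
    by (simp add: nn_integral_multc)
  also have "\<dots> < \<infinity>"
    using f g by (simp add: integrable_iff_bounded ennreal_mult_less_top)
  finally show ?thesis by (simp add: integrable_iff_bounded)
qed

lemma fubini_prim:
  fixes h k K :: "real \<Rightarrow> real"
  assumes hm[measurable]: "h \<in> borel_measurable lborel" and hi: "set_integrable lborel {0<..<1} h"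
    and kc: "continuous_on UNIV k" and Kd: "\<And>y. (K has_real_derivative k y) (at y)"
  shows "set_integrable lborel {0<..<1} (\<lambda>y. prim h y * k y)"
    and "(LBINT y:{0<..<1}. prim h y * k y) = (LBINT s:{0<..<1}. h s * (K 1 - K s))"
proof -
  have km[measurable]: "k \<in> borel_measurable lborel"
    using kc by (simp add: borel_measurable_continuous_onI)
  obtain B where B: "\<And>x. x \<in> {0..1} \<Longrightarrow> \<bar>k x\<bar> \<le> B"
  proof -
    have "compact (k ` {0..1::real})"
      using kc by (intro compact_continuous_image) (auto intro: continuous_on_subset)
    then obtain B where "\<forall>x\<in>k ` {0..1}. norm x \<le> B" using compact_imp_bounded bounded_iff by metis
    then have "\<And>x. x \<in> {0..1} \<Longrightarrow> \<bar>k x\<bar> \<le> B" by auto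
    then show ?thesis by (rule that)
  qed
  define F where "F = (\<lambda>y s::real. if 0 < y \<and> y < 1 \<and> 0 < s \<and> s < y then h s * k y else 0)"
  have Fm: "case_prod F \<in> borel_measurable (lborel \<Otimes>\<^sub>M lborel)"
    unfolding F_def by measurable
  have hI: "integrable lborel (\<lambda>s. indicator {0<..<1::real} s * h s)"
    using hi by (simp add: set_integrable_def)
  have iprod: "integrable (lborel \<Otimes>\<^sub>M lborel)
      (\<lambda>(y,s). (indicator {0<..<1::real} y * B) * \<bar>indicator {0<..<1::real} s * h s\<bar>)"
    by (rule integrable_prod_lborel) (use hI in auto)
  have Fi: "integrable (lborel \<Otimes>\<^sub>M lborel) (case_prod F)"
  proof (rule Bochner_Integration.integrable_bound[OF iprod Fm])
    show "AE z in lborel \<Otimes>\<^sub>M lborel. norm (case_prod F z) \<le> norm ((\<lambda>(y,s). (indicator {0<..<1::real} y * B) * \<bar>indicator {0<..<1::real} s * h s\<bar>) z)"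
    proof (rule AE_I2, clarify)
      fix y s :: real
      show "norm (F y s) \<le> norm ((indicator {0<..<1::real} y * B) * \<bar>indicator {0<..<1::real} s * h s\<bar>)"
      proof (cases "0 < y \<and> y < 1 \<and> 0 < s \<and> s < y")
        case True
        then have "\<bar>k y\<bar> \<le> B" using B by auto
        then have "\<bar>h s * k y\<bar> \<le> B * \<bar>h s\<bar>"
          by (simp add: abs_mult) (metis abs_ge_zero mult.commute mult_left_mono)
        moreover have "0 \<le> B" using B[of 0] by auto
        ultimately show ?thesis using True by (simp add: F_def indicator_def abs_mult)
      qed (auto simp: F_def)
    qed
  qed
  have inner_s: "(\<integral>s. F y s \<partial>lborel) = indicator {0<..<1} y * (prim h y * k y)" for y
  proof (cases "0 < y \<and> y < 1")
    case True
    have "(\<integral>s. F y s \<partial>lborel) = (\<integral>s. indicator {0<..<y} s * h s \<partial>lborel) * k y"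
    proof -
      have "(\<lambda>s. F y s) = (\<lambda>s. indicator {0<..<y} s * h s * k y)"
        using True by (auto simp: F_def indicator_def)
      then show ?thesis by (simp only: integral_mult_left_zero)
    qed
    also have "\<dots> = prim h y * k y"
      using True by (simp add: prim_eq set_lebesgue_integral_def)
    finally show ?thesis using True by simp
  qed (auto simp: F_def)
  have inner_y: "(\<integral>y. F y s \<partial>lborel) = indicator {0<..<1} s * (h s * (K 1 - K s))" for s
  proof (cases "0 < s \<and> s < 1")
    case True
    have "(\<integral>y. F y s \<partial>lborel) = h s * (\<integral>y. indicator {s<..<1} y * k y \<partial>lborel)"
    proof -
      have "(\<lambda>y. F y s) = (\<lambda>y. h s * (indicator {s<..<1} y * k y))"
        using True by (auto simp: F_def indicator_def fun_eq_iff)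
      then show ?thesis by (simp only: integral_mult_right_zero)
    qed
    also have "(\<integral>y. indicator {s<..<1} y * k y \<partial>lborel) = (LBINT y=s..1. k y)"
    proof -
      have "{x. s < x \<and> x < 1} = {s<..<1}" by auto
      then show ?thesis using True by (simp add: interval_lebesgue_integral_def einterval_def set_lebesgue_integral_def)
    qed
    also have "(LBINT y=s..1. k y) = K 1 - K s"
    proof -
      have "continuous_on {min s 1..max s 1} k" using kc by (rule continuous_on_subset) auto
      moreover have "\<And>x. (K has_vector_derivative k x) (at x within {min s 1..max s 1})"
        using Kd by (simp add: has_real_derivative_iff_has_vector_derivative[symmetric] has_field_derivative_at_within)
      ultimately show ?thesis using interval_integral_FTC_finite[of s 1 k K] by (simp add: one_ereal_def)
    qed
    finally show ?thesis using True by simp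
  next
    case False
    then have "(\<lambda>y. F y s) = (\<lambda>y. 0)" by (auto simp: F_def fun_eq_iff)
    then show ?thesis using False by simp
  qed
  have "integrable lborel (\<lambda>y. \<integral>s. F y s \<partial>lborel)"
    using lborel_pair.integrable_fst[OF Fi] .
  then show "set_integrable lborel {0<..<1} (\<lambda>y. prim h y * k y)"
    by (simp add: inner_s set_integrable_def)
  have "(\<integral>s. (\<integral>y. F y s \<partial>lborel) \<partial>lborel) = (\<integral>y. (\<integral>s. F y s \<partial>lborel) \<partial>lborel)"
    using lborel_pair.Fubini_integral[OF Fi] .
  then show "(LBINT y:{0<..<1}. prim h y * k y) = (LBINT s:{0<..<1}. h s * (K 1 - K s))"
    by (simp add: inner_s inner_y set_lebesgue_integral_def)
qed




lemma ind_mult_cong: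
  fixes f g :: "real \<Rightarrow> real"
  assumes "\<And>x. x \<in> A \<Longrightarrow> f x = g x"
  shows "(\<lambda>x. indicator A x * f x) = (\<lambda>x. indicator A x * g x)"
  using assms by (auto simp: indicator_def fun_eq_iff)

lemma set_int_cong:
  fixes f g :: "real \<Rightarrow> real"
  assumes "\<And>x. x \<in> A \<Longrightarrow> f x = g x"
  shows "(LBINT x:A. f x) = (LBINT x:A. g x)" and "set_integrable lborel A f \<longleftrightarrow> set_integrable lborel A g"
  using ind_mult_cong[OF assms] by (simp_all add: sli_def' si_def')

lemma prim_cong:
  fixes g1 g2 :: "real \<Rightarrow> real"
  assumes "0 \<le> x" "x \<le> 1" "\<And>s. 0 < s \<Longrightarrow> s < 1 \<Longrightarrow> g1 s = g2 s"
  shows "prim g1 x = prim g2 x"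
  using assms by (simp add: prim_eq) (rule set_int_cong, auto)

lemma prim_affine:
  fixes g :: "real \<Rightarrow> real"
  assumes "0 \<le> x" "set_integrable lborel {0<..<x} g"
  shows "prim (\<lambda>y. c + g y) x = c * x + prim g x"
proof -
  have ic: "set_integrable lborel {0<..<x} (\<lambda>y. c)"
    using assms by (simp add: set_integrable_def integrable_real_indicator emeasure_lborel_Ioo)
  have "prim (\<lambda>y. c + g y) x = (LBINT y:{0<..<x}. c) + (LBINT y:{0<..<x}. g y)"
    using assms ic by (simp add: prim_eq set_integral_add)
  also have "(LBINT y:{0<..<x}. c) = x * c"
    using assms by (subst set_integral_const) auto
  finally show ?thesis using assms by (simp add: prim_eq)
qed

lemma int_I_x: "(LBINT x:{0<..<1::real}. x) = 1 / 2"
proof -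
  have d: "\<And>x. ((\<lambda>x::real. x\<^sup>2 / 2) has_vector_derivative x) (at x within {min 0 1..max 0 1})"
    by (auto intro!: derivative_eq_intros simp: has_real_derivative_iff_has_vector_derivative[symmetric])
  have "interval_lebesgue_integral lborel (ereal 0) (ereal 1) (\<lambda>x::real. x) = (1::real)\<^sup>2 / 2 - 0\<^sup>2 / 2"
    using interval_integral_FTC_finite[of 0 1 "\<lambda>x. x" "\<lambda>x. x\<^sup>2 / 2", OF _ d] by (simp add: continuous_on_id)
  moreover have "{x. ereal 0 < ereal x \<and> ereal x < ereal 1} = {0<..<1::real}" by auto
  moreover have "interval_lebesgue_integral lborel (ereal 0) (ereal 1) (\<lambda>x::real. x) = (LBINT x:{x. ereal 0 < ereal x \<and> ereal x < ereal 1}. x)"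
    unfolding interval_lebesgue_integral_def einterval_def by simp
  ultimately show ?thesis by simp
qed

lemma lap_identity:
  assumes DA: "DA_lap f h" and fs: "sq_int f"
  shows "(LBINT x:{0<..<1}. h x * (x * (1 - x))) = -2 * (LBINT x:{0<..<1}. f x)"
proof -
  define I :: "real set" where "I = {0<..<1}"
  have hs: "sq_int h" and "\<exists>c. prim (\<lambda>y. c + prim h y) 1 = 0
     \<and> (AE x in lborel. 0 < x \<and> x < 1 \<longrightarrow> f x = prim (\<lambda>y. c + prim h y) x)"
    using DA by (auto simp: DA_lap_def)
  then obtain c where c1: "prim (\<lambda>y. c + prim h y) 1 = 0"
    and fae: "AE x in lborel. 0 < x \<and> x < 1 \<longrightarrow> f x = prim (\<lambda>y. c + prim h y) x" by blast
  define ht where "ht = (\<lambda>x. indicator I x * h x)"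
  have htm: "ht \<in> borel_measurable lborel" using hs by (simp add: sq_int_def sb_def' ht_def I_def)
  have hI: "set_integrable lborel I h" using sq_int_imp_int[OF hs] by (simp add: I_def)
  have htI: "set_integrable lborel {0<..<1} ht"
    using hI by (subst set_int_cong(2)[of _ _ h]) (auto simp: ht_def I_def)
  have pht: "prim ht y = prim h y" if "0 \<le> y" "y \<le> 1" for y
    using that by (intro prim_cong) (auto simp: ht_def I_def)
  have F1: "set_integrable lborel {0<..<1} (\<lambda>y. prim ht y * 1)"
       "(LBINT y:{0<..<1}. prim ht y * 1) = (LBINT s:{0<..<1}. ht s * (1 - s))"
    using fubini_prim[OF htm htI, of "\<lambda>_. 1" "\<lambda>y. y"] by (auto intro!: derivative_eq_intros)
  have F2: "(LBINT y:{0<..<1}. prim ht y * (1 - y)) = (LBINT s:{0<..<1}. ht s * ((1 - 1\<^sup>2/2) - (s - s\<^sup>2/2)))"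
  proof -
    have "continuous_on UNIV (\<lambda>y::real. 1 - y)" by (intro continuous_intros)
    moreover have "\<And>y. ((\<lambda>y::real. y - y\<^sup>2/2) has_real_derivative 1 - y) (at y)"
      by (auto intro!: derivative_eq_intros)
    ultimately show ?thesis using fubini_prim(2)[OF htm htI, of "\<lambda>y. 1 - y" "\<lambda>y. y - y\<^sup>2/2"] by simp
  qed
  define H where "H = (\<lambda>y. indicator I y * prim h y)"
  have HI: "set_integrable lborel {0<..<1} H"
  proof -
    have "set_integrable lborel {0<..<1} (\<lambda>y. prim ht y * 1)" by (rule F1(1))
    then show ?thesis by (subst set_int_cong(2)[of _ _ "\<lambda>y. prim ht y * 1"]) (auto simp: H_def I_def pht)
  qed
  have Hm: "H \<in> borel_measurable lborel"
  proof -
    have "(\<lambda>y. indicator {0<..<1::real} y * H y) \<in> borel_measurable lborel"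
      using HI by (auto simp: si_def')
    moreover have "(\<lambda>y. indicator {0<..<1::real} y * H y) = H" by (auto simp: H_def I_def indicator_def fun_eq_iff)
    ultimately show ?thesis by simp
  qed
  have F3: "(LBINT y:{0<..<1}. prim H y * 1) = (LBINT s:{0<..<1}. H s * (1 - s))"
    using fubini_prim(2)[OF Hm HI, of "\<lambda>_. 1" "\<lambda>y. y"] by (auto intro!: derivative_eq_intros)
  have F3i: "set_integrable lborel {0<..<1} (\<lambda>y. prim H y * 1)"
    using fubini_prim(1)[OF Hm HI, of "\<lambda>_. 1" "\<lambda>y. y"] by (auto intro!: derivative_eq_intros)
  have frep: "prim (\<lambda>y. c + prim h y) x = c * x + prim H x" if "0 < x" "x \<le> 1" for x
  proof -
    have HIx: "set_integrable lborel {0<..<x} H"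
      by (rule set_integrable_subset[OF HI]) (use that in auto)
    have "set_integrable lborel {0<..<x} (prim h)"
      using HIx by (subst set_int_cong(2)[of _ _ H]) (use that in \<open>auto simp: H_def I_def\<close>)
    then have "prim (\<lambda>y. c + prim h y) x = c * x + prim (prim h) x"
      using that by (intro prim_affine) auto
    also have "prim (prim h) x = prim H x"
      using that by (intro prim_cong) (auto simp: H_def I_def)
    finally show ?thesis .
  qed
  have cval: "c = - (LBINT s:{0<..<1}. h s * (1 - s))"
  proof -
    have "0 = c * 1 + prim H 1" using c1 frep[of 1] by simp
    also have "prim H 1 = (LBINT y:{0<..<1}. prim ht y * 1)"
      by (simp add: prim_eq) (rule set_int_cong(1), auto simp: H_def I_def pht)
    also have "\<dots> = (LBINT s:{0<..<1}. h s * (1 - s))"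
      unfolding F1(2) by (rule set_int_cong(1)) (auto simp: ht_def I_def)
    finally show ?thesis by simp
  qed
  have fint: "(LBINT x:{0<..<1}. f x) = c / 2 + (LBINT s:{0<..<1}. prim h s * (1 - s))"
  proof -
    have m1: "(\<lambda>x. indicator {0<..<1::real} x * f x) \<in> borel_measurable lborel"
      using fs by (simp add: sq_int_def sb_def')
    have i2: "set_integrable lborel {0<..<1} (\<lambda>x. c * x + prim H x)"
    proof -
      have "set_integrable lborel {0<..<1::real} (\<lambda>x. c * x)"
        by (rule sq_int_mult_bdd[OF sq_int_const, of "\<lambda>x. x" 1 c]) auto
      then show ?thesis using F3i by (auto intro!: set_integral_add)
    qed
    have m2: "(\<lambda>x. indicator {0<..<1::real} x * (c * x + prim H x)) \<in> borel_measurable lborel"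
      using i2 by (auto simp: si_def')
    have "(LBINT x:{0<..<1}. f x) = (LBINT x:{0<..<1}. c * x + prim H x)"
      unfolding sli_def'
    proof (rule integral_cong_AE[OF m1 m2])
      show "AE x in lborel. indicator {0<..<1::real} x * f x = indicator {0<..<1::real} x * (c * x + prim H x)"
        using fae by eventually_elim (auto simp: indicator_def frep)
    qed
    also have "\<dots> = c * (LBINT x:{0<..<1}. x) + (LBINT x:{0<..<1}. prim H x * 1)"
    proof -
      have "set_integrable lborel {0<..<1::real} (\<lambda>x. c * x)"
        by (rule sq_int_mult_bdd[OF sq_int_const, of "\<lambda>x. x" 1 c]) auto
      then show ?thesis using F3i by (simp add: set_integral_add)
    qed
    also have "(LBINT x:{0<..<1}. prim H x * 1) = (LBINT s:{0<..<1}. prim h s * (1 - s))"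
      unfolding F3 by (rule set_int_cong(1)) (auto simp: H_def I_def)
    finally show ?thesis by (simp add: int_I_x)
  qed
  have F2': "(LBINT s:{0<..<1}. prim h s * (1 - s)) = (LBINT s:{0<..<1}. h s * ((1 - 1\<^sup>2/2) - (s - s\<^sup>2/2)))"
  proof -
    have "(LBINT s:{0<..<1}. prim h s * (1 - s)) = (LBINT y:{0<..<1}. prim ht y * (1 - y))"
      by (rule set_int_cong(1)) (auto simp: pht)
    also have "\<dots> = (LBINT s:{0<..<1}. ht s * ((1 - 1\<^sup>2/2) - (s - s\<^sup>2/2)))" by (rule F2)
    also have "\<dots> = (LBINT s:{0<..<1}. h s * ((1 - 1\<^sup>2/2) - (s - s\<^sup>2/2)))"
      by (rule set_int_cong(1)) (auto simp: ht_def I_def)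
    finally show ?thesis .
  qed
  have ia: "set_integrable lborel {0<..<1} (\<lambda>s. h s * (1 - s))"
    by (rule sq_int_mult_bdd[OF hs, of _ 1]) auto
  have ib: "set_integrable lborel {0<..<1} (\<lambda>s. h s * ((1 - 1\<^sup>2/2) - (s - s\<^sup>2/2)))"
  proof (rule sq_int_mult_bdd[OF hs, of _ 1])
    fix x :: real assume "0 < x" "x < 1"
    then have "0 \<le> x\<^sup>2" "x\<^sup>2 \<le> x" by (auto simp: power2_eq_square mult_left_le)
    then show "\<bar>(1 - 1\<^sup>2/2) - (x - x\<^sup>2/2)\<bar> \<le> 1" using \<open>0 < x\<close> \<open>x < 1\<close> by (simp add: abs_le_iff) (insert \<open>0 \<le> x\<^sup>2\<close>, linarith)
  qed auto
  have "(LBINT x:{0<..<1}. h x * (x * (1 - x))) = (LBINT s:{0<..<1}. h s * (1 - s) - 2 * (h s * ((1 - 1\<^sup>2/2) - (s - s\<^sup>2/2))))"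
    by (rule set_int_cong(1)) (simp add: algebra_simps power2_eq_square)
  also have "\<dots> = (LBINT s:{0<..<1}. h s * (1 - s)) - 2 * (LBINT s:{0<..<1}. h s * ((1 - 1\<^sup>2/2) - (s - s\<^sup>2/2)))"
    using ia ib by (simp add: set_integral_diff)
  finally show ?thesis using fint F2' cval by simp
qed




definition sm :: "(real \<Rightarrow> real) \<Rightarrow> bool" where
  "sm f \<longleftrightarrow> (\<lambda>x. indicator {0<..<1::real} x * f x) \<in> borel_measurable lborel"

lemma sm_sq_int: "sq_int f \<Longrightarrow> sm f"
  by (simp add: sq_int_def sb_def' sm_def)

lemma sm_global: assumes [measurable]: "f \<in> borel_measurable lborel" shows "sm f"
  unfolding sm_def by measurable

lemma sm_lin: assumes "sm f" "sm g" shows "sm (\<lambda>x. a * f x + c * g x)"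
proof -
  have m: "(\<lambda>x. indicator {0<..<1::real} x * f x) \<in> borel_measurable lborel"
          "(\<lambda>x. indicator {0<..<1::real} x * g x) \<in> borel_measurable lborel"
    using assms by (auto simp: sm_def)
  have "(\<lambda>x. a * (indicator {0<..<1::real} x * f x) + c * (indicator {0<..<1::real} x * g x)) \<in> borel_measurable lborel"
    using m by measurable
  moreover have "(\<lambda>x. a * (indicator {0<..<1::real} x * f x) + c * (indicator {0<..<1::real} x * g x))
      = (\<lambda>x. indicator {0<..<1::real} x * (a * f x + c * g x))" by (auto simp: algebra_simps)
  ultimately show ?thesis by (simp add: sm_def)
qed

lemma sm_sq: assumes "sm f" shows "sm (\<lambda>x. (f x)\<^sup>2)"
proof -
  have m: "(\<lambda>x. indicator {0<..<1::real} x * f x) \<in> borel_measurable lborel"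
    using assms by (auto simp: sm_def)
  have "(\<lambda>x. (indicator {0<..<1::real} x * f x)\<^sup>2) \<in> borel_measurable lborel"
    using m by measurable
  moreover have "(\<lambda>x. (indicator {0<..<1::real} x * f x)\<^sup>2) = (\<lambda>x. indicator {0<..<1::real} x * (f x)\<^sup>2)"
    by (auto simp: indicator_def fun_eq_iff)
  ultimately show ?thesis by (simp add: sm_def)
qed

lemma set_int_cong_AE:
  assumes "sm f" "sm g" "AE x in lborel. 0 < x \<and> x < 1 \<longrightarrow> f x = g x"
  shows "(LBINT x:{0<..<1}. f x) = (LBINT x:{0<..<1}. g x)"
  unfolding sli_def'
proof (rule integral_cong_AE)
  show "(\<lambda>x. indicator {0<..<1::real} x * f x) \<in> borel_measurable lborel"
       "(\<lambda>x. indicator {0<..<1::real} x * g x) \<in> borel_measurable lborel"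
    using assms by (auto simp: sm_def)
  show "AE x in lborel. indicator {0<..<1::real} x * f x = indicator {0<..<1::real} x * g x"
    using assms(3) by eventually_elim (auto simp: indicator_def)
qed

definition Yf :: "(real \<Rightarrow> real \<Rightarrow> real) \<Rightarrow> real \<Rightarrow> real" where
  "Yf \<gamma> t = (LBINT x:{0<..<1}. \<gamma> t x * (x * (1 - x)))"

lemma phi_bdd: "0 < x \<Longrightarrow> x < 1 \<Longrightarrow> \<bar>x * (1 - x)\<bar> \<le> (1::real)"
proof -
  assume x: "0 < x" "x < 1"
  have a: "0 \<le> x * (1 - x)" using x by simp
  have "0 \<le> x * x" by simp
  then have b: "x * (1 - x) \<le> x" by (simp add: algebra_simps)
  show ?thesis unfolding abs_le_iff using a b x by linarith
qed

lemma phi_meas: "(\<lambda>x::real. x * (1 - x)) \<in> borel_measurable lborel"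
  by measurable

lemma int_phi: "(LBINT x:{0<..<1::real}. x * (1 - x)) = 1 / 6"
proof -
  have d: "\<And>x. ((\<lambda>x::real. x\<^sup>2 / 2 - x ^ 3 / 3) has_vector_derivative x * (1 - x)) (at x within {min 0 1..max 0 1})"
    by (auto intro!: derivative_eq_intros simp: has_real_derivative_iff_has_vector_derivative[symmetric] power2_eq_square algebra_simps)
  have "interval_lebesgue_integral lborel (ereal 0) (ereal 1) (\<lambda>x::real. x * (1 - x)) = ((1::real)\<^sup>2 / 2 - 1 ^ 3 / 3) - (0\<^sup>2 / 2 - 0 ^ 3 / 3)"
    using interval_integral_FTC_finite[of 0 1 "\<lambda>x. x * (1 - x)" "\<lambda>x. x\<^sup>2 / 2 - x ^ 3 / 3", OF _ d]
    by (simp add: continuous_intros)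
  moreover have "{x. ereal 0 < ereal x \<and> ereal x < ereal 1} = {0<..<1::real}" by auto
  moreover have "interval_lebesgue_integral lborel (ereal 0) (ereal 1) (\<lambda>x::real. x * (1 - x)) = (LBINT x:{x. ereal 0 < ereal x \<and> ereal x < ereal 1}. x * (1 - x))"
    unfolding interval_lebesgue_integral_def einterval_def by simp
  ultimately show ?thesis by simp
qed

lemma Yf_diff:
  assumes "sq_int f" "sq_int g"
  shows "(LBINT x:{0<..<1}. f x * (x * (1 - x))) - (LBINT x:{0<..<1}. g x * (x * (1 - x)))
     = (LBINT x:{0<..<1}. (f x - g x) * (x * (1 - x)))"
proof -
  have "set_integrable lborel {0<..<1} (\<lambda>x. f x * (x * (1 - x)))"
       "set_integrable lborel {0<..<1} (\<lambda>x. g x * (x * (1 - x)))"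
    using assms by (auto intro!: sq_int_mult_bdd[OF _ phi_meas phi_bdd])
  then have "(LBINT x:{0<..<1}. f x * (x * (1 - x))) - (LBINT x:{0<..<1}. g x * (x * (1 - x)))
     = (LBINT x:{0<..<1}. f x * (x * (1 - x)) - g x * (x * (1 - x)))"
    by (rule set_integral_diff(2)[symmetric])
  also have "\<dots> = (LBINT x:{0<..<1}. (f x - g x) * (x * (1 - x)))"
    by (rule set_int_cong(1)) (simp add: left_diff_distrib)
  finally show ?thesis .
qed

lemma Yf_bound:
  assumes "sq_int f"
  shows "\<bar>LBINT x:{0<..<1}. f x * (x * (1 - x))\<bar> \<le> L2nrm f"
  using CS_bound[OF assms phi_meas phi_bdd] by simp

lemma deriv_Y:
  fixes \<gamma> r :: "real \<Rightarrow> real \<Rightarrow> real" and h :: "real \<Rightarrow> real"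
  assumes sq: "\<And>s. sq_int (\<gamma> s)"
  and rm: "r t \<in> borel_measurable lborel"
  and rae: "AE x in lborel. 0 < x \<and> x < 1 \<longrightarrow> r t x = bt + wt * \<gamma> t x"
  and hs: "sq_int h"
  and HD: "has_H_deriv \<gamma> (\<lambda>x. r t x + h x) t"
  shows "(Yf \<gamma> has_real_derivative (bt / 6 + wt * Yf \<gamma> t + (LBINT x:{0<..<1}. h x * (x * (1 - x))))) (at t)"
proof -
  define w where "w = (\<lambda>x. bt + wt * \<gamma> t x + h x)"
  have ws: "sq_int w"
  proof -
    have "sq_int (\<lambda>x. 1 * bt + wt * \<gamma> t x)" by (rule sq_int_lin[OF sq_int_const sq])
    then have "sq_int (\<lambda>x. 1 * (1 * bt + wt * \<gamma> t x) + 1 * h x)" by (rule sq_int_lin[OF _ hs])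
    then show ?thesis by (simp add: w_def)
  qed
  define D where "D = bt / 6 + wt * Yf \<gamma> t + (LBINT x:{0<..<1}. h x * (x * (1 - x)))"
  have Dw: "D = (LBINT x:{0<..<1}. w x * (x * (1 - x)))"
  proof -
    have i1: "set_integrable lborel {0<..<1::real} (\<lambda>x. bt * (x * (1 - x)))"
      by (rule sq_int_mult_bdd[OF sq_int_const phi_meas phi_bdd])
    have i2: "set_integrable lborel {0<..<1::real} (\<lambda>x. wt * (\<gamma> t x * (x * (1 - x))))"
      using sq_int_mult_bdd[OF sq phi_meas phi_bdd] by auto
    have i3: "set_integrable lborel {0<..<1::real} (\<lambda>x. h x * (x * (1 - x)))"
      by (rule sq_int_mult_bdd[OF hs phi_meas phi_bdd])
    have "(LBINT x:{0<..<1}. w x * (x * (1 - x))) = (LBINT x:{0<..<1}. bt * (x * (1 - x)) + wt * (\<gamma> t x * (x * (1 - x))) + h x * (x * (1 - x)))"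
      by (simp add: w_def algebra_simps)
    also have "\<dots> = (LBINT x:{0<..<1}. bt * (x * (1 - x))) + (LBINT x:{0<..<1}. wt * (\<gamma> t x * (x * (1 - x)))) + (LBINT x:{0<..<1}. h x * (x * (1 - x)))"
      using i1 i2 i3 by (simp add: set_integral_add)
    also have "\<dots> = D"
      by (simp add: D_def Yf_def int_phi)
    finally show ?thesis by simp
  qed
  define Q where "Q = (\<lambda>s x. (\<gamma> s x - \<gamma> t x) / (s - t) - (r t x + h x))"
  define Q' where "Q' = (\<lambda>s x. (\<gamma> s x - \<gamma> t x) / (s - t) - w x)"
  have qexp: "(\<lambda>x. (\<gamma> s x - \<gamma> t x) / (s - t)) = (\<lambda>x. inverse (s - t) * \<gamma> s x + (- inverse (s - t)) * \<gamma> t x)" for s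
    by (auto simp: fun_eq_iff divide_inverse algebra_simps)
  have qsq: "sq_int (\<lambda>x. (\<gamma> s x - \<gamma> t x) / (s - t))" for s
    unfolding qexp by (rule sq_int_lin[OF sq sq])
  have Q's: "sq_int (Q' s)" for s
  proof -
    have "sq_int (\<lambda>x. 1 * ((\<gamma> s x - \<gamma> t x) / (s - t)) + (-1) * w x)"
      by (rule sq_int_lin[OF qsq ws])
    then show ?thesis by (simp add: Q'_def)
  qed
  have Qsm: "sm (Q s)" for s
  proof -
    have a: "sm (\<lambda>x. (\<gamma> s x - \<gamma> t x) / (s - t))" using qsq by (rule sm_sq_int)
    have b: "sm (\<lambda>x. 1 * r t x + 1 * h x)" by (rule sm_lin[OF sm_global[OF rm] sm_sq_int[OF hs]])
    have "sm (\<lambda>x. 1 * ((\<gamma> s x - \<gamma> t x) / (s - t)) + (-1) * (1 * r t x + 1 * h x))"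
      by (rule sm_lin[OF a b])
    moreover have "(\<lambda>x. 1 * ((\<gamma> s x - \<gamma> t x) / (s - t)) + (-1) * (1 * r t x + 1 * h x)) = Q s"
      by (simp add: Q_def fun_eq_iff)
    ultimately show ?thesis by simp
  qed
  have L2eq: "L2nrm (Q s) = L2nrm (Q' s)" for s
  proof -
    have "(LBINT x:{0<..<1}. (Q s x)\<^sup>2) = (LBINT x:{0<..<1}. (Q' s x)\<^sup>2)"
    proof (rule set_int_cong_AE)
      show "sm (\<lambda>x. (Q s x)\<^sup>2)" by (rule sm_sq[OF Qsm])
      show "sm (\<lambda>x. (Q' s x)\<^sup>2)" by (rule sm_sq[OF sm_sq_int[OF Q's]])
      show "AE x in lborel. 0 < x \<and> x < 1 \<longrightarrow> (Q s x)\<^sup>2 = (Q' s x)\<^sup>2"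
        using rae by eventually_elim (auto simp: Q_def Q'_def w_def)
    qed
    then show ?thesis by (simp add: L2nrm_def)
  qed
  have bound: "\<bar>(Yf \<gamma> s - Yf \<gamma> t) / (s - t) - D\<bar> \<le> L2nrm (Q s)" for s
  proof -
    have e1: "Yf \<gamma> s - Yf \<gamma> t = (LBINT x:{0<..<1}. (\<gamma> s x - \<gamma> t x) * (x * (1 - x)))"
      unfolding Yf_def by (rule Yf_diff[OF sq sq])
    have "(LBINT x:{0<..<1}. (\<gamma> s x - \<gamma> t x) * (x * (1 - x))) / (s - t) = (LBINT x:{0<..<1}. (\<gamma> s x - \<gamma> t x) * (x * (1 - x)) / (s - t))"
      by (rule set_integral_divide_zero[symmetric])
    also have "\<dots> = (LBINT x:{0<..<1}. (\<gamma> s x - \<gamma> t x) / (s - t) * (x * (1 - x)))"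
      by (rule set_int_cong(1)) simp
    finally have e2: "(LBINT x:{0<..<1}. (\<gamma> s x - \<gamma> t x) * (x * (1 - x))) / (s - t) = (LBINT x:{0<..<1}. (\<gamma> s x - \<gamma> t x) / (s - t) * (x * (1 - x)))" .
    have e3: "(LBINT x:{0<..<1}. (\<gamma> s x - \<gamma> t x) / (s - t) * (x * (1 - x))) - (LBINT x:{0<..<1}. w x * (x * (1 - x)))
       = (LBINT x:{0<..<1}. ((\<gamma> s x - \<gamma> t x) / (s - t) - w x) * (x * (1 - x)))"
      by (rule Yf_diff[OF qsq ws])
    have "(Yf \<gamma> s - Yf \<gamma> t) / (s - t) - D = (LBINT x:{0<..<1}. Q' s x * (x * (1 - x)))"
      unfolding Dw e1 e2 e3 Q'_def ..
    then show ?thesis using Yf_bound[OF Q's] L2eq by simp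
  qed
  have "((\<lambda>s. L2nrm (Q s)) \<longlongrightarrow> 0) (at t)"
    using HD by (simp add: has_H_deriv_def Q_def)
  then have "((\<lambda>s. (Yf \<gamma> s - Yf \<gamma> t) / (s - t) - D) \<longlongrightarrow> 0) (at t)"
    by (rule Lim_null_comparison[rotated]) (use bound in \<open>auto intro: always_eventually\<close>)
  then have "((\<lambda>s. (Yf \<gamma> s - Yf \<gamma> t) / (s - t)) \<longlongrightarrow> D) (at t)"
    by (rule LIM_zero_cancel)
  then show ?thesis by (simp add: has_field_derivative_iff D_def)
qed




lemma key:
  fixes b \<omega> :: "real \<Rightarrow> real" and \<gamma> :: "real \<Rightarrow> real \<Rightarrow> real" and b0 t1 :: real
  assumes b0: "0 < b0" and bb: "\<And>t. b0 \<le> b t" and wpos: "\<And>t. 0 \<le> \<omega> t"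
  and ct: "complete_traj b \<omega> \<gamma>"
  and lim: "((\<lambda>t. L2nrm (\<gamma> t)) \<longlongrightarrow> 0) at_bot"
  and inD: "\<And>t0. t0 \<le> t1 \<Longrightarrow> in_D (\<gamma> t0)"
  shows False
proof -
  have sol: "\<And>\<tau>. is_solution b \<omega> \<tau> (\<gamma> \<tau>) \<gamma>" using ct by (simp add: complete_traj_def)
  have sq: "\<And>s. sq_int (\<gamma> s)" using sol by (simp add: is_solution_def)
  have pos: "AE x in lborel. 0 < x \<and> x < 1 \<longrightarrow> 0 < \<gamma> t x" if tt: "t \<le> t1" for t
  proof -
    obtain F where VF: "V_rep (\<gamma> t) F" and Fp: "\<forall>x. 0 < x \<and> x < 1 \<longrightarrow> F x > 0"
      using inD[OF tt] by (auto simp: in_D_def)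
    have "AE x in lborel. 0 < x \<and> x < 1 \<longrightarrow> \<gamma> t x = F x" using VF by (simp add: V_rep_def)
    then show ?thesis by eventually_elim (use Fp in auto)
  qed
  have Ynn: "0 \<le> Yf \<gamma> t" if tt: "t \<le> t1" for t
    unfolding Yf_def sli_def'
  proof (rule integral_nonneg_AE)
    show "AE x in lborel. 0 \<le> indicator {0<..<1::real} x * (\<gamma> t x * (x * (1 - x)))"
      using pos[OF tt] by eventually_elim (auto simp: indicator_def)
  qed
  obtain T where T: "T \<le> t1" "\<And>t. t \<le> T \<Longrightarrow> L2nrm (\<gamma> t) < b0 / 24"
  proof -
    have "eventually (\<lambda>t. L2nrm (\<gamma> t) < b0 / 24) at_bot"
      using order_tendstoD(2)[OF lim, of "b0 / 24"] b0 by simp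
    then obtain N where "\<And>t. t \<le> N \<Longrightarrow> L2nrm (\<gamma> t) < b0 / 24"
      by (auto simp: eventually_at_bot_linorder)
    then show ?thesis using that[of "min N t1"] by auto
  qed
  have AC: "\<forall>\<epsilon>>0. \<exists>\<delta>>0. \<forall>(n::nat) (p::nat\<Rightarrow>real) q. (\<forall>i<n. s0 \<le> p i \<and> p i \<le> q i \<and> q i \<le> T)
       \<and> (\<forall>i<n. \<forall>j<n. i \<noteq> j \<longrightarrow> q i \<le> p j \<or> q j \<le> p i) \<and> (\<Sum>i<n. q i - p i) < \<delta>
       \<longrightarrow> (\<Sum>i<n. \<bar>Yf \<gamma> (q i) - Yf \<gamma> (p i)\<bar>) < \<epsilon>" if s0T: "s0 < T" for s0
  proof (intro allI impI)
    fix \<epsilon> :: real assume "0 < \<epsilon>"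
    have "H_abs_cont \<gamma> s0 T" using sol[of "s0 - 1"] s0T by (simp add: is_solution_def)
    then obtain \<delta> where dp: "\<delta> > 0" and dH: "\<forall>(n::nat) (a::nat \<Rightarrow> real) c.
     (\<forall>i<n. s0 \<le> a i \<and> a i \<le> c i \<and> c i \<le> T)
     \<and> (\<forall>i<n. \<forall>j<n. i \<noteq> j \<longrightarrow> c i \<le> a j \<or> c j \<le> a i)
     \<and> (\<Sum>i<n. c i - a i) < \<delta>
     \<longrightarrow> (\<Sum>i<n. L2nrm (\<lambda>x. \<gamma> (c i) x - \<gamma> (a i) x)) < \<epsilon>"
      using \<open>0 < \<epsilon>\<close> unfolding H_abs_cont_def by blast
    have Yd: "\<bar>Yf \<gamma> v - Yf \<gamma> u\<bar> \<le> L2nrm (\<lambda>x. \<gamma> v x - \<gamma> u x)" for u v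
    proof -
      have s: "sq_int (\<lambda>x. \<gamma> v x - \<gamma> u x)"
        using sq_int_lin[OF sq sq, of 1 v "-1" u] by simp
      show ?thesis unfolding Yf_def Yf_diff[OF sq sq] by (rule Yf_bound[OF s])
    qed
    show "\<exists>\<delta>>0. \<forall>(n::nat) (p::nat\<Rightarrow>real) q. (\<forall>i<n. s0 \<le> p i \<and> p i \<le> q i \<and> q i \<le> T)
       \<and> (\<forall>i<n. \<forall>j<n. i \<noteq> j \<longrightarrow> q i \<le> p j \<or> q j \<le> p i) \<and> (\<Sum>i<n. q i - p i) < \<delta>
       \<longrightarrow> (\<Sum>i<n. \<bar>Yf \<gamma> (q i) - Yf \<gamma> (p i)\<bar>) < \<epsilon>"
    proof (intro exI[of _ \<delta>] conjI allI impI)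
      show "\<delta> > 0" by (rule dp)
      fix n :: nat and p q :: "nat \<Rightarrow> real"
      assume H: "(\<forall>i<n. s0 \<le> p i \<and> p i \<le> q i \<and> q i \<le> T)
       \<and> (\<forall>i<n. \<forall>j<n. i \<noteq> j \<longrightarrow> q i \<le> p j \<or> q j \<le> p i) \<and> (\<Sum>i<n. q i - p i) < \<delta>"
      have "(\<Sum>i<n. \<bar>Yf \<gamma> (q i) - Yf \<gamma> (p i)\<bar>) \<le> (\<Sum>i<n. L2nrm (\<lambda>x. \<gamma> (q i) x - \<gamma> (p i) x))"
        by (rule sum_mono) (rule Yd)
      also have "\<dots> < \<epsilon>" using dH H by blast
      finally show "(\<Sum>i<n. \<bar>Yf \<gamma> (q i) - Yf \<gamma> (p i)\<bar>) < \<epsilon>" .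
    qed
  qed
  have DER: "\<exists>N0. N0 \<in> null_sets lborel \<and> (\<forall>t. s0 < t \<longrightarrow> t < T \<longrightarrow> t \<notin> N0 \<longrightarrow>
       (\<exists>d. (Yf \<gamma> has_real_derivative d) (at t) \<and> b0 / 12 \<le> d))" for s0
  proof -
    obtain r where L2: "L2loc_H (s0 - 1) r"
      and AE1: "AE t in lborel. s0 - 1 < t \<longrightarrow>
               (AE x in lborel. 0 < x \<and> x < 1 \<longrightarrow>
                  (\<exists>y. Hsign (\<gamma> t x) y \<and> r t x = b t * y + \<omega> t * \<gamma> t x))"
      and AE2: "AE t in lborel. s0 - 1 < t \<longrightarrow>
               (\<exists>h. DA_lap (\<gamma> t) h \<and> has_H_deriv \<gamma> (\<lambda>x. r t x + h x) t)"
      using sol[of "s0 - 1"] unfolding is_solution_def by blast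
    have rjm: "(\<lambda>(t, x). r t x) \<in> borel_measurable (lborel \<Otimes>\<^sub>M lborel)"
      using L2 by (simp add: L2loc_H_def)
    have rm: "r t \<in> borel_measurable lborel" for t
      using measurable_Pair2[OF rjm, of t] by simp
    have "AE t in lborel. s0 - 1 < t \<longrightarrow>
               (AE x in lborel. 0 < x \<and> x < 1 \<longrightarrow>
                  (\<exists>y. Hsign (\<gamma> t x) y \<and> r t x = b t * y + \<omega> t * \<gamma> t x))
            \<and> (\<exists>h. DA_lap (\<gamma> t) h \<and> has_H_deriv \<gamma> (\<lambda>x. r t x + h x) t)"
      using AE1 AE2 by eventually_elim blast
    then obtain N0 where N0: "N0 \<in> null_sets lborel" and N0P: "\<And>t. t \<in> space lborel - N0 \<Longrightarrow> s0 - 1 < t \<longrightarrow>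
               (AE x in lborel. 0 < x \<and> x < 1 \<longrightarrow>
                  (\<exists>y. Hsign (\<gamma> t x) y \<and> r t x = b t * y + \<omega> t * \<gamma> t x))
            \<and> (\<exists>h. DA_lap (\<gamma> t) h \<and> has_H_deriv \<gamma> (\<lambda>x. r t x + h x) t)"
      by (rule AE_E3) blast
    show ?thesis
    proof (intro exI[of _ N0] conjI allI impI)
      show "N0 \<in> null_sets lborel" by (rule N0)
      fix t assume t: "s0 < t" "t < T" "t \<notin> N0"
      then have P: "(AE x in lborel. 0 < x \<and> x < 1 \<longrightarrow>
                  (\<exists>y. Hsign (\<gamma> t x) y \<and> r t x = b t * y + \<omega> t * \<gamma> t x))"
            "(\<exists>h. DA_lap (\<gamma> t) h \<and> has_H_deriv \<gamma> (\<lambda>x. r t x + h x) t)"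
        using N0P[of t] by auto
      obtain h where DA: "DA_lap (\<gamma> t) h" and HD: "has_H_deriv \<gamma> (\<lambda>x. r t x + h x) t"
        using P(2) by blast
      have hs: "sq_int h" using DA by (simp add: DA_lap_def)
      have tt1: "t \<le> t1" using t T by simp
      have rae: "AE x in lborel. 0 < x \<and> x < 1 \<longrightarrow> r t x = b t + \<omega> t * \<gamma> t x"
        using P(1) pos[OF tt1] by eventually_elim (auto simp: Hsign_def)
      have der: "(Yf \<gamma> has_real_derivative (b t / 6 + \<omega> t * Yf \<gamma> t + (LBINT x:{0<..<1}. h x * (x * (1 - x))))) (at t)"
        by (rule deriv_Y[where \<gamma>=\<gamma> and r=r and t=t and h=h and bt="b t" and wt="\<omega> t", OF sq rm[of t] rae hs HD])
      have li: "(LBINT x:{0<..<1}. h x * (x * (1 - x))) = -2 * (LBINT x:{0<..<1}. \<gamma> t x)"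
        by (rule lap_identity[OF DA sq])
      have "(LBINT x:{0<..<1}. \<gamma> t x) \<le> L2nrm (\<gamma> t)"
      proof -
        have "\<bar>LBINT x:{0<..<1}. \<gamma> t x * 1\<bar> \<le> 1 * L2nrm (\<gamma> t)"
          by (rule CS_bound[OF sq[of t]]) auto
        then show ?thesis by simp
      qed
      then have "(LBINT x:{0<..<1}. \<gamma> t x) < b0 / 24" using T(2)[of t] t by simp
      moreover have "0 \<le> \<omega> t * Yf \<gamma> t" using wpos Ynn[OF tt1] by simp
      moreover have "b0 \<le> b t" by (rule bb)
      ultimately have "b0 / 12 \<le> b t / 6 + \<omega> t * Yf \<gamma> t + (LBINT x:{0<..<1}. h x * (x * (1 - x)))"
        unfolding li by linarith
      then show "\<exists>d. (Yf \<gamma> has_real_derivative d) (at t) \<and> b0 / 12 \<le> d" using der by blast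
    qed
  qed
  define s0 where "s0 = T - 1 - 12 * \<bar>Yf \<gamma> T\<bar> / b0"
  have "0 \<le> 12 * \<bar>Yf \<gamma> T\<bar> / b0" using b0 by simp
  then have s0T: "s0 < T" by (simp add: s0_def)
  obtain N0 where N0: "N0 \<in> null_sets lborel" and N0D: "\<And>t. s0 < t \<Longrightarrow> t < T \<Longrightarrow> t \<notin> N0 \<Longrightarrow>
       (\<exists>d. (Yf \<gamma> has_real_derivative d) (at t) \<and> b0 / 12 \<le> d)"
    using DER[of s0] by blast
  have "b0 / 12 * (T - s0) \<le> Yf \<gamma> T - Yf \<gamma> s0"
    by (rule ac_lower[OF _ AC[OF s0T] N0 N0D]) (use s0T in auto)
  moreover have "0 \<le> Yf \<gamma> s0" using Ynn[of s0] s0T T by simp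
  moreover have "b0 / 12 * (T - s0) = b0 / 12 + \<bar>Yf \<gamma> T\<bar>"
    using b0 by (simp add: s0_def field_simps)
  ultimately show False using abs_ge_self[of "Yf \<gamma> T"] b0 by linarith
qed


theorem corollary5:
  fixes b \<omega> :: "real \<Rightarrow> real" and b0 b1 \<omega>0 \<omega>1 :: real
  assumes "continuous_on UNIV b" and "continuous_on UNIV \<omega>"
    and "0 < b0" and "\<forall>t. b0 \<le> b t \<and> b t \<le> b1"
    and "0 \<le> \<omega>0" and "\<forall>t. \<omega>0 \<le> \<omega> t \<and> \<omega> t \<le> \<omega>1" and "\<omega>1 < pi\<^sup>2"
  shows "(\<forall>\<gamma>. complete_traj b \<omega> \<gamma> \<and> nonneg_traj \<gamma> \<and> bounded_traj \<gamma>
            \<and> ((\<lambda>t. L2nrm (\<gamma> t)) \<longlongrightarrow> 0) at_bot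
           \<longrightarrow> (\<forall>t1. \<exists>t0\<le>t1. \<not> in_D (\<gamma> t0)))
       \<and> (W12loc b \<and> W12loc \<omega> \<longrightarrow>
          (\<forall>\<gamma>. complete_traj b \<omega> \<gamma> \<and> bounded_traj \<gamma>
            \<and> ((\<lambda>t. L2nrm (\<gamma> t)) \<longlongrightarrow> 0) at_bot
           \<longrightarrow> (\<forall>t1. \<exists>t0\<le>t1. \<not> in_D (\<gamma> t0))))"
proof -
  have bb: "\<And>t. b0 \<le> b t" using assms(4) by auto
  have wp: "\<And>t. 0 \<le> \<omega> t" using assms(5,6) by (meson order_trans)
  have K: "\<forall>t1. \<exists>t0\<le>t1. \<not> in_D (\<gamma> t0)"
    if c: "complete_traj b \<omega> \<gamma>" and l: "((\<lambda>t. L2nrm (\<gamma> t)) \<longlongrightarrow> 0) at_bot" for \<gamma>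
  proof (intro allI, rule ccontr)
    fix t1 assume "\<not> (\<exists>t0\<le>t1. \<not> in_D (\<gamma> t0))"
    then have "\<And>t0. t0 \<le> t1 \<Longrightarrow> in_D (\<gamma> t0)" by auto
    from key[OF assms(3) bb wp c l this] show False .
  qed
  show ?thesis using K by blast
qed

end
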